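(* If $G$ is a tree with $|V(G)| \ge 3$, then $\det(G) = \det'(G)$.
   Context: A vertex subset $S$ of $G$ is a vertex determining set if the only automorphism of $G$ fixing every vertex of $S$ is the identity; the determining number $\det(G)$ is the minimum size of a vertex determining set. For a graph $G$ with at most one isolated vertex and no component isomorphic to $K_2$, an edge subset $T$ is an edge determining set if the only automorphism $\phi$ of $G$ satisfying $\{\phi(u),\phi(v)\}=\{u,v\}$ for all $\{u,v\}\in T$ is the identity; the determining index $\det'(G)$ is the minimum size of an edge determining set. *)

theory Defs
  imports Main
begin

definition simple_graph :: "'a set \<Rightarrow> 'a set set \<Rightarrow> bool" where
  "simple_graph V E \<longleftrightarrow> finite V \<and>
     (\<forall>e\<in>E. \<exists>u v. e = {u, v} \<and> u \<in> V \<and> v \<in> V \<and> u \<noteq> v)"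

definition connected_graph :: "'a set \<Rightarrow> 'a set set \<Rightarrow> bool" where
  "connected_graph V E \<longleftrightarrow>
     (\<forall>u\<in>V. \<forall>v\<in>V. (u, v) \<in> {(x, y). {x, y} \<in> E}\<^sup>*)"

definition is_cycle :: "'a set \<Rightarrow> 'a set set \<Rightarrow> 'a list \<Rightarrow> bool" where
  "is_cycle V E xs \<longleftrightarrow> length xs \<ge> 3 \<and> distinct xs \<and> set xs \<subseteq> V \<and>
     (\<forall>i < length xs. {xs ! i, xs ! ((i + 1) mod length xs)} \<in> E)"

definition is_tree :: "'a set \<Rightarrow> 'a set set \<Rightarrow> bool" where
  "is_tree V E \<longleftrightarrow> simple_graph V E \<and> V \<noteq> {} \<and> connected_graph V E \<and>
     \<not> (\<exists>xs. is_cycle V E xs)"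

definition automorphism :: "'a set \<Rightarrow> 'a set set \<Rightarrow> ('a \<Rightarrow> 'a) \<Rightarrow> bool" where
  "automorphism V E f \<longleftrightarrow> bij_betw f V V \<and>
     (\<forall>u\<in>V. \<forall>v\<in>V. {u, v} \<in> E \<longleftrightarrow> {f u, f v} \<in> E)"

definition vertex_determining_set :: "'a set \<Rightarrow> 'a set set \<Rightarrow> 'a set \<Rightarrow> bool" where
  "vertex_determining_set V E S \<longleftrightarrow> S \<subseteq> V \<and>
     (\<forall>f. automorphism V E f \<and> (\<forall>s\<in>S. f s = s) \<longrightarrow> (\<forall>x\<in>V. f x = x))"

definition determining_number :: "'a set \<Rightarrow> 'a set set \<Rightarrow> nat" where
  "determining_number V E = (LEAST n. \<exists>S. vertex_determining_set V E S \<and> card S = n)"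

definition edge_determining_set :: "'a set \<Rightarrow> 'a set set \<Rightarrow> 'a set set \<Rightarrow> bool" where
  "edge_determining_set V E T \<longleftrightarrow> T \<subseteq> E \<and>
     (\<forall>f. automorphism V E f \<and> (\<forall>u v. {u, v} \<in> T \<longrightarrow> {f u, f v} = {u, v})
        \<longrightarrow> (\<forall>x\<in>V. f x = x))"

definition determining_index :: "'a set \<Rightarrow> 'a set set \<Rightarrow> nat" where
  "determining_index V E = (LEAST n. \<exists>T. edge_determining_set V E T \<and> card T = n)"

end

theory Submission
  imports Defs "HOL-Library.Transitive_Closure_Table"
begin

definition Rx :: "'a set set \<Rightarrow> 'a \<Rightarrow> 'a \<Rightarrow> 'a \<Rightarrow> 'a \<Rightarrow> bool" where
  "Rx E u v x y \<longleftrightarrow> {x,y} \<in> E \<and> {x,y} \<noteq> {u,v}"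

definition side :: "'a set set \<Rightarrow> 'a \<Rightarrow> 'a \<Rightarrow> 'a set" where
  "side E u v = {x. (Rx E u v)\<^sup>*\<^sup>* u x}"

lemma Rx_sym: "Rx E u v x y \<Longrightarrow> Rx E u v y x" by (auto simp: Rx_def insert_commute)
lemma Rx_swap: "Rx E u v = Rx E v u" by (auto simp: Rx_def insert_commute fun_eq_iff)

lemma sym_rtranclp: assumes "\<And>x y. r x y \<Longrightarrow> r y x" and "r\<^sup>*\<^sup>* a b" shows "r\<^sup>*\<^sup>* b a"
  using assms(2)
proof (induction rule: rtranclp_induct)
  case base then show ?case by simp
next
  case (step y z) then show ?case using assms(1) by (meson converse_rtranclp_into_rtranclp)
qed

lemma rp_nil: "rtrancl_path r x [] y \<Longrightarrow> x = y"
  by (erule rtrancl_path.cases) simp_all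

locale tr =
  fixes V :: "'a set" and E :: "'a set set"
  assumes tree: "is_tree V E" and three: "card V \<ge> 3"
begin

lemma fin: "finite V" using tree by (simp add: is_tree_def simple_graph_def)

lemma edge_in: assumes "{x,y} \<in> E" shows "x \<in> V \<and> y \<in> V \<and> x \<noteq> y"
proof -
  obtain a b where "{x,y} = {a,b}" "a \<in> V" "b \<in> V" "a \<noteq> b"
    using tree assms unfolding is_tree_def simple_graph_def by blast
  then show ?thesis by (auto simp: doubleton_eq_iff)
qed

lemma edge_form: assumes "e \<in> E" shows "\<exists>a b. e = {a,b}"
  using tree assms unfolding is_tree_def simple_graph_def by blast

lemma KT: assumes "{u,v} \<in> E" shows "\<not> (Rx E u v)\<^sup>*\<^sup>* u v"
proof
  assume "(Rx E u v)\<^sup>*\<^sup>* u v"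
  then obtain xs where "rtrancl_path (Rx E u v) u xs v" by (auto simp: rtranclp_eq_rtrancl_path)
  then obtain ys where p: "rtrancl_path (Rx E u v) u ys v" and d: "distinct (u#ys)"
    by (metis rtrancl_path_distinct)
  have uv: "u \<noteq> v" using edge_in assms by blast
  have ne: "ys \<noteq> []" using rp_nil[of "Rx E u v" u v] p uv by auto
  have l2: "length ys \<ge> 2"
  proof (rule ccontr)
    assume n2: "\<not> ?thesis"
    have "length ys > 0" using ne by simp
    then have "length ys = 1" using n2 by linarith
    then obtain y where "ys = [y]" by (cases ys) auto
    then have "Rx E u v u y" "y = v" using rtrancl_path_nth[OF p, of 0] rtrancl_path_last[OF p] by auto
    thus False by (simp add: Rx_def)
  qed
  have lastv: "last ys = v" using rtrancl_path_last[OF p ne] .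
  have "is_cycle V E (u#ys)"
    unfolding is_cycle_def
  proof (intro conjI allI impI)
    show "3 \<le> length (u#ys)" using l2 by simp
    show "distinct (u#ys)" by fact
    show "set (u#ys) \<subseteq> V"
    proof
      fix z assume "z \<in> set (u#ys)"
      then show "z \<in> V"
      proof (cases "z = u")
        case True thus ?thesis using edge_in assms by blast
      next
        case False
        with \<open>z \<in> set (u#ys)\<close> have "z \<in> set ys" by simp
        then obtain i where "i < length ys" "z = ys!i" by (auto simp: in_set_conv_nth)
        then have "Rx E u v ((u#ys)!i) z" using rtrancl_path_nth[OF p \<open>i < length ys\<close>] by simp
        thus ?thesis using edge_in[of "(u#ys)!i" z] by (simp add: Rx_def)
      qed
    qed
    fix i assume i: "i < length (u#ys)"
    show "{(u#ys)!i, (u#ys)!((i+1) mod length (u#ys))} \<in> E"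
    proof (cases "i < length ys")
      case True
      then have "(i+1) mod length (u#ys) = i+1" by simp
      moreover have "Rx E u v ((u#ys)!i) (ys!i)" using rtrancl_path_nth[OF p True] by simp
      ultimately show ?thesis by (simp add: Rx_def)
    next
      case False
      then have il: "i = length ys" using i by simp
      then have "(u#ys)!i = ys ! (length ys - 1)" using ne by (cases "length ys") auto
      then have "(u#ys)!i = v" using lastv ne by (simp add: last_conv_nth)
      moreover have "(i+1) mod length (u#ys) = 0" using il by simp
      ultimately show ?thesis using assms by (simp add: insert_commute)
    qed
  qed
  thus False using tree unfolding is_tree_def by blast
qed

lemma side_sub: assumes "u \<in> V" shows "side E u v \<subseteq> V"
proof
  fix x assume "x \<in> side E u v"
  then have "(Rx E u v)\<^sup>*\<^sup>* u x" by (simp add: side_def)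
  then show "x \<in> V"
  proof (induction rule: rtranclp_induct)
    case base then show ?case using assms .
  next
    case (step y z) then show ?case using edge_in by (auto simp: Rx_def)
  qed
qed

lemma side_fin: "u \<in> V \<Longrightarrow> finite (side E u v)"
  using side_sub fin finite_subset by blast

lemma cover: assumes "{u,v} \<in> E" "x \<in> V" shows "x \<in> side E u v \<or> x \<in> side E v u"
proof -
  have uV: "u \<in> V" using edge_in assms by blast
  have "(u,x) \<in> {(a,b). {a,b} \<in> E}\<^sup>*" using tree uV assms(2)
    by (auto simp: is_tree_def connected_graph_def)
  then show ?thesis
  proof (induction rule: rtrancl_induct)
    case base then show ?case by (simp add: side_def)
  next
    case (step y z)
    show ?case
    proof (cases "{y,z} = {u,v}")
      case True
      then have "z = u \<or> z = v" by (auto simp: doubleton_eq_iff)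
      then show ?thesis by (auto simp: side_def)
    next
      case False
      then have "Rx E u v y z" using step by (simp add: Rx_def)
      then show ?thesis using step.IH Rx_swap[of E u v]
        by (auto simp: side_def intro: rtranclp.rtrancl_into_rtrancl)
    qed
  qed
qed

lemma disj: assumes "{u,v} \<in> E" shows "side E u v \<inter> side E v u = {}"
proof (rule ccontr)
  assume "\<not> ?thesis"
  then obtain x where "(Rx E u v)\<^sup>*\<^sup>* u x" "(Rx E u v)\<^sup>*\<^sup>* v x"
    using Rx_swap[of E u v] by (auto simp: side_def)
  then have "(Rx E u v)\<^sup>*\<^sup>* u v" using sym_rtranclp[of "Rx E u v"] Rx_sym
    by (metis rtranclp_trans)
  thus False using KT assms by blast
qed

lemma card_sum: assumes "{u,v} \<in> E" shows "card (side E u v) + card (side E v u) = card V"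
proof -
  have uV: "u \<in> V" "v \<in> V" using edge_in assms by auto
  have "side E u v \<union> side E v u = V" using cover[OF assms] side_sub uV by blast
  then show ?thesis using card_Un_disjoint[OF side_fin side_fin disj[OF assms]] uV by simp
qed

lemma aut_map: assumes f: "automorphism V E f" and uV: "u \<in> V" "v \<in> V"
  shows "f ` side E u v \<subseteq> side E (f u) (f v)"
proof
  fix z assume "z \<in> f ` side E u v"
  then obtain x where x: "x \<in> side E u v" "z = f x" by blast
  have inj: "inj_on f V" using f by (simp add: automorphism_def bij_betw_def)
  have "(Rx E u v)\<^sup>*\<^sup>* u x" using x by (simp add: side_def)
  then have "(Rx E (f u) (f v))\<^sup>*\<^sup>* (f u) (f x)"
  proof (induction rule: rtranclp_induct)
    case base then show ?case by simp
  next
    case (step y w)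
    have yV: "y \<in> V" using side_sub[OF uV(1)] step(1) by (auto simp: side_def)
    have wV: "w \<in> V" using step(2) edge_in by (auto simp: Rx_def)
    have "{f y, f w} \<in> E" using f step(2) yV wV by (auto simp: automorphism_def Rx_def)
    moreover have "{f y, f w} \<noteq> {f u, f v}"
    proof
      assume "{f y, f w} = {f u, f v}"
      then have "(f y = f u \<and> f w = f v) \<or> (f y = f v \<and> f w = f u)" by (auto simp: doubleton_eq_iff)
      then have "{y,w} = {u,v}" using inj yV wV uV by (auto dest: inj_onD)
      then show False using step(2) by (simp add: Rx_def)
    qed
    ultimately show ?case using step.IH by (auto simp: Rx_def intro: rtranclp.rtrancl_into_rtrancl)
  qed
  then show "z \<in> side E (f u) (f v)" using x by (simp add: side_def)
qed

lemma card_aut: assumes f: "automorphism V E f" and e: "{u,v} \<in> E"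
  shows "card (side E u v) \<le> card (side E (f u) (f v))"
proof -
  have uV: "u \<in> V" "v \<in> V" using edge_in e by auto
  have inj: "inj_on f V" and img: "f ` V = V" using f by (auto simp: automorphism_def bij_betw_def)
  have fuV: "f u \<in> V" using img uV by blast
  have "card (side E u v) = card (f ` side E u v)"
    using inj side_sub[OF uV(1)] by (metis card_image inj_on_subset)
  also have "\<dots> \<le> card (side E (f u) (f v))"
    using aut_map[OF f uV] side_fin[OF fuV] by (rule card_mono[rotated])
  finally show ?thesis .
qed

lemma swap_eq: assumes f: "automorphism V E f" and e: "{u,v} \<in> E" and "f u = v" "f v = u"
  shows "card (side E u v) = card (side E v u)"
proof -
  have e': "{v,u} \<in> E" using e by (simp add: insert_commute)
  show ?thesis using card_aut[OF f e] card_aut[OF f e'] assms by simp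
qed

lemma other_sub: assumes e1: "{u,v} \<in> E" and e2: "{u,w} \<in> E" and vw: "v \<noteq> w"
  shows "side E w u \<subseteq> side E u v" and "u \<notin> side E w u"
proof -
  have e2': "{w,u} \<in> E" using e2 by (simp add: insert_commute)
  show nu: "u \<notin> side E w u" using KT[OF e2'] by (simp add: side_def)
  have uv: "u \<noteq> v" using edge_in e1 by blast
  show "side E w u \<subseteq> side E u v"
  proof
    fix x assume "x \<in> side E w u"
    then have "(Rx E w u)\<^sup>*\<^sup>* w x" by (simp add: side_def)
    then have "(Rx E u v)\<^sup>*\<^sup>* u x"
    proof (induction rule: rtranclp_induct)
      case base
      have "{u,w} \<noteq> {u,v}" using vw uv by (auto simp: doubleton_eq_iff)
      then have "Rx E u v u w" using e2 by (simp add: Rx_def)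
      then show ?case by simp
    next
      case (step y z)
      have zs: "(Rx E w u)\<^sup>*\<^sup>* w z" using step(1,2) by (rule rtranclp.rtrancl_into_rtrancl)
      have "{y,z} \<noteq> {u,v}"
      proof
        assume "{y,z} = {u,v}"
        then have "y = u \<or> z = u" by (auto simp: doubleton_eq_iff)
        then show False using nu step(1) zs by (auto simp: side_def)
      qed
      then have "Rx E u v y z" using step(2) by (simp add: Rx_def)
      then show ?case using step.IH by (rule rtranclp.rtrancl_into_rtrancl[rotated])
    qed
    then show "x \<in> side E u v" by (simp add: side_def)
  qed
qed

lemma lemA: assumes f: "automorphism V E f" and e: "{u,v} \<in> E" and fu: "f u = u" and fv: "f v \<noteq> v"
  shows "card (side E v u) < card (side E u v)"
proof -
  have uV: "u \<in> V" "v \<in> V" using edge_in e by auto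
  have e': "{v,u} \<in> E" using e by (simp add: insert_commute)
  have ew: "{u, f v} \<in> E" using f e uV fu by (auto simp: automorphism_def)
  have "card (side E v u) \<le> card (side E (f v) u)" using card_aut[OF f e'] fu by simp
  also have "\<dots> < card (side E u v)"
  proof (rule psubset_card_mono)
    show "finite (side E u v)" using side_fin uV by blast
    have "u \<in> side E u v" by (simp add: side_def)
    then show "side E (f v) u \<subset> side E u v"
      using other_sub[OF e ew fv[symmetric]] by blast
  qed
  finally show ?thesis .
qed

lemma nbr: assumes "s \<in> V" shows "\<exists>t. {s,t} \<in> E"
proof -
  have "card (V - {s}) \<ge> 2" using three assms fin by simp
  then obtain w where w: "w \<in> V" "w \<noteq> s"
    by (metis Diff_iff card.empty ex_in_conv insertCI not_numeral_le_zero)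
  have "(s,w) \<in> {(a,b). {a,b} \<in> E}\<^sup>*" using tree assms w
    by (auto simp: is_tree_def connected_graph_def)
  then show ?thesis using w(2)
    by (cases rule: converse_rtranclE) auto
qed

lemma good_edge: assumes sV: "s \<in> V" shows "\<exists>t. {s,t} \<in> E \<and> card (side E s t) \<noteq> card (side E t s)"
proof (rule ccontr)
  assume H: "\<not> ?thesis"
  obtain t1 where t1: "{s,t1} \<in> E" using nbr sV by blast
  have t1': "{t1,s} \<in> E" using t1 by (simp add: insert_commute)
  have c1: "card (side E s t1) = card (side E t1 s)" using H t1 by blast
  have t1V: "t1 \<in> V" using edge_in t1 by blast
  show False
  proof (cases "\<exists>t2. t2 \<noteq> t1 \<and> {s,t2} \<in> E")
    case True
    then obtain t2 where t2: "t2 \<noteq> t1" "{s,t2} \<in> E" by blast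
    have t2': "{t2,s} \<in> E" using t2 by (simp add: insert_commute)
    have t2V: "t2 \<in> V" using edge_in t2 by blast
    have c2: "card (side E s t2) = card (side E t2 s)" using H t2 by blast
    have n1: "card (side E s t1) + card (side E t1 s) = card V" using card_sum[OF t1] .
    have n2: "card (side E s t2) + card (side E t2 s) = card V" using card_sum[OF t2(2)] .
    have sub2: "side E t2 s \<subseteq> side E s t1" and ns2: "s \<notin> side E t2 s"
      using other_sub[OF t1 t2(2) t2(1)[symmetric]] by auto
    have ns1: "s \<notin> side E t1 s" using KT[OF t1'] by (simp add: side_def)
    have d12: "side E t1 s \<inter> side E t2 s = {}" using disj[OF t1'] sub2 by blast
    have "card (side E t1 s \<union> side E t2 s \<union> {s}) = card (side E t1 s) + card (side E t2 s) + 1"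
      using d12 ns1 ns2 side_fin[OF t1V] side_fin[OF t2V]
      by (simp add: card_Un_disjoint)
    moreover have "card (side E t1 s \<union> side E t2 s \<union> {s}) \<le> card V"
      using side_sub[OF t1V] side_sub[OF t2V] sV fin by (intro card_mono) auto
    ultimately show False using n1 n2 c1 c2 by linarith
  next
    case False
    have "side E s t1 = {s}"
    proof
      show "{s} \<subseteq> side E s t1" by (simp add: side_def)
      show "side E s t1 \<subseteq> {s}"
      proof
        fix x assume "x \<in> side E s t1"
        then have "(Rx E s t1)\<^sup>*\<^sup>* s x" by (simp add: side_def)
        then show "x \<in> {s}"
        proof (induction rule: rtranclp_induct)
          case base then show ?case by simp
        next
          case (step y z)
          then have "y = s" by simp
          then show ?case using step(2) False by (auto simp: Rx_def)
        qed
      qed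
    qed
    then have "card (side E s t1) = 1" by simp
    then show False using c1 card_sum[OF t1] three by linarith
  qed
qed

lemma part1: assumes S: "vertex_determining_set V E S"
  shows "\<exists>T. edge_determining_set V E T \<and> card T \<le> card S"
proof -
  define g where "g s = (SOME t. {s,t} \<in> E \<and> card (side E s t) \<noteq> card (side E t s))" for s
  have SV: "S \<subseteq> V" using S by (simp add: vertex_determining_set_def)
  have g: "{s, g s} \<in> E \<and> card (side E s (g s)) \<noteq> card (side E (g s) s)" if sS: "s \<in> S" for s
  proof -
    have "s \<in> V" using SV sS by blast
    then have "\<exists>t. {s,t} \<in> E \<and> card (side E s t) \<noteq> card (side E t s)" by (rule good_edge)
    then show ?thesis unfolding g_def by (rule someI_ex)
  qed
  define T where "T = (\<lambda>s. {s, g s}) ` S"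
  have "edge_determining_set V E T"
    unfolding edge_determining_set_def
  proof (intro conjI allI impI)
    show "T \<subseteq> E" using g unfolding T_def by blast
    fix f assume A: "automorphism V E f \<and> (\<forall>u v. {u, v} \<in> T \<longrightarrow> {f u, f v} = {u, v})"
    have "f s = s" if sS: "s \<in> S" for s
    proof (rule ccontr)
      assume ne: "f s \<noteq> s"
      have "{s, g s} \<in> T" using sS unfolding T_def by blast
      then have "{f s, f (g s)} = {s, g s}" using A by blast
      then have fs: "f s = g s" "f (g s) = s" using ne by (auto simp: doubleton_eq_iff)
      have "card (side E s (g s)) = card (side E (g s) s)"
        using swap_eq[of f s "g s"] A g[OF sS] fs by blast
      then show False using g[OF sS] by blast
    qed
    then have "\<forall>x\<in>S. f x = x" by blast
    then show "\<forall>x\<in>V. f x = x" using S A unfolding vertex_determining_set_def by blast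
  qed
  moreover have "finite S" using SV fin finite_subset by blast
  then have "card T \<le> card S" unfolding T_def by (rule card_image_le)
  ultimately show ?thesis by blast
qed

lemma finE: "finite E"
proof -
  have "E \<subseteq> Pow V" using edge_form edge_in by blast
  then show ?thesis using fin finite_subset by blast
qed

lemma part2: assumes T: "edge_determining_set V E T"
  shows "\<exists>S. vertex_determining_set V E S \<and> card S \<le> card T"
proof -
  have TE: "T \<subseteq> E" using T by (simp add: edge_determining_set_def)
  have ex: "\<exists>u v. e = {u,v} \<and> card (side E u v) \<le> card (side E v u)" if eT: "e \<in> T" for e
  proof -
    obtain a b where ab: "e = {a,b}" using edge_form TE eT by blast
    show ?thesis
    proof (cases "card (side E a b) \<le> card (side E b a)")
      case True then show ?thesis using ab by blast
    next
      case False then show ?thesis using ab by (metis insert_commute nat_le_linear)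
    qed
  qed
  define h where "h e = (SOME u. \<exists>v. e = {u,v} \<and> card (side E u v) \<le> card (side E v u))" for e
  have h: "\<exists>v. e = {h e, v} \<and> card (side E (h e) v) \<le> card (side E v (h e))" if "e \<in> T" for e
    unfolding h_def using ex[OF that] by (rule someI_ex)
  define S where "S = h ` T"
  have "vertex_determining_set V E S"
    unfolding vertex_determining_set_def
  proof (intro conjI allI impI)
    show "S \<subseteq> V"
    proof
      fix x assume "x \<in> S"
      then obtain e where e: "e \<in> T" "x = h e" by (auto simp: S_def)
      then obtain v where "e = {x, v}" using h by blast
      then show "x \<in> V" using e TE edge_in by blast
    qed
    fix f assume A: "automorphism V E f \<and> (\<forall>s\<in>S. f s = s)"
    have "{f x, f y} = {x, y}" if xy: "{x,y} \<in> T" for x y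
    proof -
      obtain v where v: "{x,y} = {h {x,y}, v}" "card (side E (h {x,y}) v) \<le> card (side E v (h {x,y}))"
        using h xy by blast
      have fu: "f (h {x,y}) = h {x,y}" using A xy by (auto simp: S_def)
      have eE: "{h {x,y}, v} \<in> E" using v xy TE by auto
      have "f v = v"
      proof (rule ccontr)
        assume fv: "f v \<noteq> v"
        have "card (side E v (h {x,y})) < card (side E (h {x,y}) v)"
          using lemA[of f "h {x,y}" v] A eE fu fv by blast
        then show False using v(2) by linarith
      qed
      then show ?thesis using v(1) fu by (auto simp: doubleton_eq_iff)
    qed
    then show "\<forall>x\<in>V. f x = x" using T A by (auto simp: edge_determining_set_def)
  qed
  moreover have "card S \<le> card T" unfolding S_def
    by (rule card_image_le) (use TE finE finite_subset in blast)
  ultimately show ?thesis by blast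
qed

end

theorem theorem10:
  fixes V :: "'a set" and E :: "'a set set"
  assumes "is_tree V E" and "card V \<ge> 3"
  shows "determining_number V E = determining_index V E"
proof -
  interpret tr V E using assms by unfold_locales
  let ?P = "\<lambda>n. \<exists>S. vertex_determining_set V E S \<and> card S = n"
  let ?Q = "\<lambda>n. \<exists>T. edge_determining_set V E T \<and> card T = n"
  have VV: "vertex_determining_set V E V" unfolding vertex_determining_set_def by blast
  have PV: "?P (card V)" using VV by blast
  have "?P (Least ?P)" using PV by (rule LeastI)
  then obtain S where S: "vertex_determining_set V E S" "card S = determining_number V E"
    unfolding determining_number_def by blast
  obtain T where T: "edge_determining_set V E T" "card T \<le> card S" using part1[OF S(1)] by blast
  have Q: "?Q (card T)" using T by blast
  have i1: "determining_index V E \<le> card T" unfolding determining_index_def using Q by (rule Least_le)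
  have "?Q (Least ?Q)" using Q by (rule LeastI)
  then obtain T' where T': "edge_determining_set V E T'" "card T' = determining_index V E"
    unfolding determining_index_def by blast
  obtain S' where S': "vertex_determining_set V E S'" "card S' \<le> card T'" using part2[OF T'(1)] by blast
  have "?P (card S')" using S'(1) by blast
  then have "determining_number V E \<le> card S'" unfolding determining_number_def by (rule Least_le)
  then show ?thesis using i1 T S T' S' by linarith
qed

end
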